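(* For $n\geq1$ let $\ell_n=\sqrt[n]{n!}$. Then, as $n\to\infty$, $$\frac{\ell_{n+2}}{\ell_{n+1}}+\frac{\ell_n}{\ell_{n+1}}=2-\frac{1}{2n^3}+o\Big(\frac1{n^3}\Big).$$ In particular, the sequence $a_n=\ell_{n+1}-\ell_n$ is eventually strictly decreasing. *)

theory Defs
  imports Complex_Main "HOL-Library.Landau_Symbols"
begin

definition ell :: "nat \<Rightarrow> real" where
  "ell n = root n (fact n)"

end

theory Submission
  imports Defs "HOL-Real_Asymp.Real_Asymp"
begin
lemma exp_rem: fixes x :: real assumes "\<bar>x\<bar> \<le> 1" shows "\<bar>exp x - 1 - x\<bar> \<le> x^2"
proof (cases "x \<ge> 0")
  case True
  have "exp x \<le> 1 + x + x^2" using exp_bound[of x] assms True by auto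
  moreover have "1 + x \<le> exp x" by (rule exp_ge_add_one_self)
  moreover have "0 \<le> x^2" by simp
  ultimately show ?thesis unfolding abs_le_iff by linarith
next
  case False
  have a: "1 - x \<le> exp (-x)" using exp_ge_add_one_self[of "-x"] by simp
  have b1: "0 \<le> 1 + x" using assms by (simp add: abs_le_iff)
  have b2: "0 < x^2" using False by simp
  have b: "0 < 1 + x + x^2" using b1 b2 by linarith
  have "(1 - x) * (1 + x + x^2) \<le> exp (-x) * (1 + x + x^2)" using a b by (intro mult_right_mono) auto
  moreover have "(1 - x) * (1 + x + x^2) = 1 - x^3" by (simp add: algebra_simps power2_eq_square power3_eq_cube)
  moreover have "x^3 < 0" using False by (simp add: power_less_zero_eq)
  ultimately have "1 \<le> exp (-x) * (1 + x + x^2)" by linarith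
  then have "exp x * 1 \<le> exp x * (exp (-x) * (1 + x + x^2))" by (intro mult_left_mono) auto
  also have "\<dots> = 1 + x + x^2" by (simp add: exp_minus field_simps)
  finally have "exp x \<le> 1 + x + x^2" by simp
  moreover have "1 + x \<le> exp x" by (rule exp_ge_add_one_self)
  moreover have "0 \<le> x^2" by simp
  ultimately show ?thesis unfolding abs_le_iff by linarith
qed

lemma lnfact: fixes m :: nat assumes "m \<ge> 1"
  shows "real m * ln (real m) - real m + 1 \<le> ln (fact m) \<and> ln (fact m) \<le> (real m + 1) * ln (real m + 1) - real m"
  using assms
proof (induction m rule: dec_induct)
  case base
  have "ln (2::real) \<ge> 1/2" using ln_2_less_1 ln_ge_iff[of 2 "1/2"] exp_half_le2 by simp
  then show ?case by simp
next
  case (step m)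
  have m: "real m \<ge> 1" using step by simp
  have lf: "ln (fact (Suc m) :: real) = ln (real m + 1) + ln (fact m)"
    by (simp add: ln_mult add.commute)
  have l1: "ln ((real m + 1) / real m) \<le> (real m + 1)/real m - 1"
    using m by (intro ln_le_minus_one) auto
  have l1': "ln ((real m + 1) / real m) = ln (real m + 1) - ln (real m)" using m by (simp add: ln_div)
  have "real m * (ln (real m + 1) - ln (real m)) \<le> real m * ((real m + 1)/real m - 1)"
    using l1 l1' m by (intro mult_left_mono) auto
  also have "\<dots> = 1" using m by (simp add: field_simps)
  finally have A: "real m * ln (real m + 1) - real m * ln (real m) \<le> 1" by (simp add: algebra_simps)
  have l2: "ln ((real m + 1) / (real m + 2)) \<le> (real m + 1)/(real m + 2) - 1"
    using m by (intro ln_le_minus_one) auto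
  have l2': "ln ((real m + 1) / (real m + 2)) = ln (real m + 1) - ln (real m + 2)" using m by (simp add: ln_div)
  have e: "(real m + 1)/(real m + 2) - 1 = - (1/(real m + 2))" using m by (simp add: field_simps)
  have "1/(real m + 2) \<le> ln (real m + 2) - ln (real m + 1)" using l2 l2' e by linarith
  hence "(real m + 2) * (1/(real m + 2)) \<le> (real m + 2) * (ln (real m + 2) - ln (real m + 1))"
    using m by (intro mult_left_mono) auto
  hence B: "1 \<le> (real m + 2) * (ln (real m + 2) - ln (real m + 1))" using m by simp
  show ?case using step.IH lf A B by (simp add: algebra_simps)
qed

theorem mainTheorem5:
  shows "(\<lambda>n::nat. ell (n + 2) / ell (n + 1) + ell n / ell (n + 1)
            - (2 - 1 / (2 * real n ^ 3)))
           \<in> o[at_top](\<lambda>n. 1 / real n ^ 3)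
       \<and> (\<forall>\<^sub>F n in at_top. ell (n + 2) - ell (n + 1) < ell (n + 1) - ell n)"
proof -
  define a1 where "a1 = (\<lambda>n::nat. (ln (1 + 1/(real n+1)) + 1)/(real n+2))"
  define a0 where "a0 = (\<lambda>n::nat. -1/real n)"
  define p where "p = (\<lambda>n::nat. 1/((real n+1)*(real n+2)))"
  define q where "q = (\<lambda>n::nat. 1/(real n*(real n+1)))"
  define U where "U = (\<lambda>n::nat. (real n+2)*ln(real n+2) - (real n+1)*ln(real n+1))"
  define dl where "dl = (\<lambda>n::nat. ln (fact (n+1)) - ((real n+1)*ln(real n+1) - (real n+1)))"
  define E where "E = (\<lambda>n. ell (n + 2) / ell (n + 1) + ell n / ell (n + 1))"
  define F0 where "F0 = (\<lambda>n. exp (a1 n) + exp (a0 n))"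
  define B where "B = (\<lambda>n. U n * \<bar>q n * exp (a0 n) - p n * exp (a1 n)\<bar> + exp (a1 n) * (U n)^2 * (p n)^2 + exp (a0 n) * (U n)^2 * (q n)^2)"
  have ellexp: "ell m = exp (ln (fact m) / real m)" if "m \<ge> 1" for m
    using that unfolding ell_def by (simp add: root_powr_inverse powr_def)
  have lnf2: "ln (fact (n+2) :: real) = ln (real n + 2) + ln (fact (n+1))" for n :: nat
  proof -
    have "(fact (n+2) :: real) = (real n + 2) * fact (n+1)"
      by (simp add: numeral_2_eq_2 add.commute)
    then show ?thesis by (simp add: ln_mult)
  qed
  have lnf1: "ln (fact (n+1) :: real) = ln (real n + 1) + ln (fact n)" for n :: nat
  proof -
    have "(fact (n+1) :: real) = (real n + 1) * fact n"
      by (simp add: add.commute)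
    then show ?thesis by (simp add: ln_mult)
  qed
  have K1: "ell (n+2)/ell(n+1) = exp (a1 n - dl n * p n)" if n: "n \<ge> 1" for n
  proof -
    have "ell (n+2)/ell(n+1) = exp (ln (fact (n+2)) / real (n+2) - ln (fact (n+1)) / real (n+1))"
      using ellexp[of "n+2"] ellexp[of "n+1"] by (simp add: exp_diff)
    also have "ln (fact (n+2)) / real (n+2) - ln (fact (n+1)) / real (n+1) = a1 n - dl n * p n"
    proof -
      have l: "ln (1 + 1/(real n+1)) = ln (real n + 2) - ln (real n + 1)"
      proof -
        have "1 + 1/(real n+1) = (real n + 2)/(real n + 1)" by (simp add: field_simps)
        then show ?thesis by (simp add: ln_div)
      qed
      have alg: "(v + w)/(x+2) - w/(x+1) = ((v - u) + 1)/(x+2) - (w - ((x+1)*u - (x+1))) * (1/((x+1)*(x+2)))"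
        if x: "x \<ge> 0" for x u v w :: real
      proof -
        have a: "x + 1 > 0" "x + 2 > 0" using x by auto
        have e1: "w/(x+1) = w*(x+2) / ((x+1)*(x+2))" using a by simp
        have e2: "(v + w)/(x+2) = (v + w)*(x+1) / ((x+1)*(x+2))" using a by simp
        have e3: "((v - u) + 1)/(x+2) = ((v - u) + 1)*(x+1) / ((x+1)*(x+2))" using a by simp
        show ?thesis unfolding e1 e2 e3 by (simp add: diff_divide_distrib[symmetric] algebra_simps)
      qed
      show ?thesis unfolding a1_def dl_def p_def l lnf2
        using alg[where x="real n" and u="ln (real n + 1)" and v="ln (real n + 2)" and w="ln (fact (n+1))"]
        by (simp del: fact_Suc add: add.commute)
    qed
    finally show ?thesis .
  qed
  have K2: "ell n / ell (n+1) = exp (a0 n + dl n * q n)" if n: "n \<ge> 1" for n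
  proof -
    have "ell n/ell(n+1) = exp (ln (fact n) / real n - ln (fact (n+1)) / real (n+1))"
      using ellexp[of "n"] ellexp[of "n+1"] n by (simp add: exp_diff)
    also have "ln (fact n) / real n - ln (fact (n+1)) / real (n+1) = a0 n + dl n * q n"
    proof -
      have alg: "f/x - (v+f)/(x+1) = -1/x + ((v + f) - ((x+1)*v - (x+1))) * (1/(x*(x+1)))"
        if x: "x > 0" for x v f :: real
      proof -
        have a: "x + 1 > 0" "x > 0" using x by auto
        have e1: "f/x = f*(x+1) / (x*(x+1))" using a by simp
        have e2: "(v+f)/(x+1) = (v+f)*x / (x*(x+1))" using a by simp
        have e3a: "(x+1)/(x*(x+1)) = 1/x" using a by simp
        have e3: "-1/x = -(x+1) / (x*(x+1))" using e3a by (metis minus_divide_left)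
        show ?thesis unfolding e1 e2 e3 by (simp add: diff_divide_distrib[symmetric] add_divide_distrib[symmetric] algebra_simps)
      qed
      show ?thesis unfolding a0_def dl_def q_def lnf1
        using alg[where x="real n" and v="ln (real n + 1)" and f="ln (fact n)"] n
        by (simp del: fact_Suc add: add.commute)
    qed
    finally show ?thesis .
  qed
  have K3: "0 \<le> dl n \<and> dl n \<le> U n" for n
    using lnfact[of "n+1"] unfolding dl_def U_def by (simp add: algebra_simps)
  have G1: "(\<lambda>n. F0 n - (2 - 1/(2*real n^3))) \<in> o(\<lambda>n. 1/real n^3)"
    unfolding F0_def a1_def a0_def by real_asymp
  have G2: "B \<in> o(\<lambda>n. 1/real n^3)"
    unfolding B_def a1_def a0_def U_def p_def q_def by real_asymp
  have G3: "eventually (\<lambda>n. U n * q n \<le> 1) at_top"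
    unfolding U_def q_def by real_asymp
  have bound: "eventually (\<lambda>n. norm (E n - F0 n) \<le> 1 * norm (B n)) at_top"
    using G3 eventually_ge_at_top[of 1]
  proof eventually_elim
    case (elim n)
    define d where "d = dl n"
    have d: "0 \<le> d" "d \<le> U n" using K3[of n] by (auto simp: d_def)
    have pq1: "0 < real n*(real n+1)" using elim by simp
    have pq2: "real n*(real n+1) \<le> (real n+1)*(real n+2)" by (simp add: algebra_simps)
    have pq: "0 \<le> p n" "p n \<le> q n" "0 \<le> q n"
      unfolding p_def q_def using pq1 pq2
      by (auto intro!: divide_left_mono mult_pos_pos)
    have dq: "d * q n \<le> U n * q n" using d pq by (intro mult_right_mono) auto
    have dp: "d * p n \<le> d * q n" using d pq by (intro mult_left_mono) auto
    have r1: "\<bar>exp (-(d * p n)) - 1 - (-(d * p n))\<bar> \<le> (-(d * p n))^2"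
      using d pq dp dq elim by (intro exp_rem) (auto simp: abs_le_iff)
    have r2: "\<bar>exp (d * q n) - 1 - (d * q n)\<bar> \<le> (d * q n)^2"
      using d pq dp dq elim by (intro exp_rem) (auto simp: abs_le_iff)
    have eq: "E n - F0 n = d * (q n * exp (a0 n) - p n * exp (a1 n))
        + exp (a1 n) * (exp (-(d * p n)) - 1 - (-(d * p n)))
        + exp (a0 n) * (exp (d * q n) - 1 - (d * q n))"
      unfolding E_def F0_def K1[OF elim(2)] K2[OF elim(2)] d_def[symmetric]
      by (simp add: exp_diff exp_add exp_minus field_simps)
    have "\<bar>E n - F0 n\<bar> \<le> \<bar>d * (q n * exp (a0 n) - p n * exp (a1 n))\<bar>
        + \<bar>exp (a1 n) * (exp (-(d * p n)) - 1 - (-(d * p n)))\<bar>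
        + \<bar>exp (a0 n) * (exp (d * q n) - 1 - (d * q n))\<bar>"
      unfolding eq by linarith
    also have "\<dots> \<le> U n * \<bar>q n * exp (a0 n) - p n * exp (a1 n)\<bar>
        + exp (a1 n) * (U n)^2 * (p n)^2 + exp (a0 n) * (U n)^2 * (q n)^2"
    proof (intro add_mono)
      show "\<bar>d * (q n * exp (a0 n) - p n * exp (a1 n))\<bar> \<le> U n * \<bar>q n * exp (a0 n) - p n * exp (a1 n)\<bar>"
        using d by (simp add: abs_mult mult_right_mono)
      have "(d * p n)^2 \<le> (U n * p n)^2" using d pq by (intro power_mono mult_right_mono) auto
      then have s1: "(-(d * p n))^2 \<le> (U n)^2 * (p n)^2" by (simp add: power_mult_distrib)
      have t1: "exp (a1 n) * (-(d * p n))^2 \<le> exp (a1 n) * ((U n)^2 * (p n)^2)"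
        using s1 by (intro mult_left_mono) auto
      have u1: "\<bar>exp (a1 n) * (exp (-(d * p n)) - 1 - (-(d * p n)))\<bar> \<le> exp (a1 n) * (-(d * p n))^2"
        unfolding abs_mult abs_exp_cancel using r1 by (intro mult_left_mono) auto
      show "\<bar>exp (a1 n) * (exp (-(d * p n)) - 1 - (-(d * p n)))\<bar> \<le> exp (a1 n) * (U n)^2 * (p n)^2"
        using order_trans[OF u1 t1] by (simp only: mult.assoc)
      have "(d * q n)^2 \<le> (U n * q n)^2" using d pq by (intro power_mono mult_right_mono) auto
      then have s2: "(d * q n)^2 \<le> (U n)^2 * (q n)^2" by (simp add: power_mult_distrib)
      have t2: "exp (a0 n) * (d * q n)^2 \<le> exp (a0 n) * ((U n)^2 * (q n)^2)"
        using s2 by (intro mult_left_mono) auto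
      have u2: "\<bar>exp (a0 n) * (exp (d * q n) - 1 - (d * q n))\<bar> \<le> exp (a0 n) * (d * q n)^2"
        unfolding abs_mult abs_exp_cancel using r2 by (intro mult_left_mono) auto
      show "\<bar>exp (a0 n) * (exp (d * q n) - 1 - (d * q n))\<bar> \<le> exp (a0 n) * (U n)^2 * (q n)^2"
        using order_trans[OF u2 t2] by (simp only: mult.assoc)
    qed
    also have "\<dots> \<le> 1 * norm (B n)" unfolding B_def by simp
    finally show ?case by simp
  qed
  have H: "(\<lambda>n. E n - F0 n) \<in> o(\<lambda>n. 1/real n^3)"
    using bigoI[OF bound] G2 by (rule landau_o.big_small_trans)
  have P1: "(\<lambda>n. E n - (2 - 1/(2*real n^3))) \<in> o(\<lambda>n. 1/real n^3)"
  proof -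
    have eqf: "(\<lambda>n. (E n - F0 n) + (F0 n - (2 - 1/(2*real n^3)))) = (\<lambda>n. E n - (2 - 1/(2*real n^3)))"
      by (rule ext) simp
    show ?thesis using sum_in_smallo(1)[OF H G1] unfolding eqf .
  qed
  have ev4: "eventually (\<lambda>n. norm (E n - (2 - 1/(2*real n^3))) \<le> 1/4 * norm (1/real n^3)) at_top"
    by (rule landau_o.smallD[OF P1]) simp
  have P2: "eventually (\<lambda>n. ell (n + 2) - ell (n + 1) < ell (n + 1) - ell n) at_top"
    using ev4 eventually_ge_at_top[of 1]
  proof eventually_elim
    case (elim n)
    have pos: "ell (n+1) > 0" unfolding ell_def by simp
    have n3: "0 < 1/real n^3" using elim by simp
    have "E n - (2 - 1/(2*real n^3)) \<le> 1/4 * (1/real n^3)"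
      using elim(1) n3 by (simp add: abs_le_iff)
    moreover have "1/(2*real n^3) = 1/2 * (1/real n^3)" by simp
    ultimately have "E n < 2" using n3 by linarith
    then have "ell (n+2) + ell n < 2 * ell (n+1)"
      using pos unfolding E_def by (simp add: field_simps)
    then show ?case by simp
  qed
  show ?thesis using P1 P2 unfolding E_def by simp
qed

end
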